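(* Let $p$ be an odd prime, $n\ge1$, and let $f:V(K_n)\to\{1,\dots,n\}$ be any bijection on the vertex set of the complete graph $K_n$. Put $q=\lfloor n/p\rfloor$, $r=n-qp$, $\psi=\max\{0,2r-p+1\}$, $\delta_s=1$ if $s$ is even and $0$ otherwise, and $\mathcal S=\mathcal S_1+\mathcal S_2$ with $$\mathcal S_1=\sum_{\substack{s=2\\ s\ne p}}^{r+1}(s-1-\delta_s)(s/p),\qquad \mathcal S_2=\sum_{\substack{s=r+2\\ s\ne p}}^{2r}(2r-s+1-\delta_s)(s/p).$$ Then, with $e_{f_p^*}(i)$ the number of edges of $K_n$ with label $i$ under the induced edge labeling $f_p^*$, $$e_{f_p^*}(0)-e_{f_p^*}(1)=\tfrac12\left(2nq-pq^2-q+\psi\right)-\tfrac12\,\mathcal S .$$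
   Context: For an odd prime $p$ and an integer $a$ not divisible by $p$, $(a/p)$ denotes the Legendre symbol: $1$ if $a$ is a quadratic residue mod $p$, $-1$ otherwise. Empty sums equal $0$. Given a graph $G$ of order $n$ and a bijection $f:V(G)\to\{1,\dots,n\}$, the induced edge labeling $f_p^*:E(G)\to\{0,1\}$ is defined by $f_p^*(uv)=0$ if $p\mid f(u)+f(v)$ or $((f(u)+f(v))/p)=-1$, and $f_p^*(uv)=1$ if $((f(u)+f(v))/p)=1$; $e_{f_p^*}(i)$ is the number of edges with label $i$. *)

theory Defs
  imports "HOL-Number_Theory.Number_Theory"
begin

definition complete_edges :: "'a set \<Rightarrow> 'a set set" where
  "complete_edges V = {{u, v} | u v. u \<in> V \<and> v \<in> V \<and> u \<noteq> v}"

definition edge_label :: "nat \<Rightarrow> ('a \<Rightarrow> nat) \<Rightarrow> 'a set \<Rightarrow> nat" where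
  "edge_label p f e =
     (let s = int (sum f e) in
      if int p dvd s \<or> Legendre s (int p) = -1 then 0 else 1)"

definition edge_count :: "nat \<Rightarrow> ('a \<Rightarrow> nat) \<Rightarrow> 'a set \<Rightarrow> nat \<Rightarrow> nat" where
  "edge_count p f V i = card {e \<in> complete_edges V. edge_label p f e = i}"

end

theory Submission
  imports Defs
begin


lemma Legendre_cong:
  assumes "[a = b] (mod P)"
  shows "Legendre a P = Legendre b P"
proof -
  have "[a = 0] (mod P) \<longleftrightarrow> [b = 0] (mod P)"
    using assms cong_sym cong_trans by blast
  moreover have "QuadRes P a \<longleftrightarrow> QuadRes P b"
    unfolding QuadRes_def using assms cong_sym cong_trans by blast
  ultimately show ?thesis unfolding Legendre_def by simp
qed

lemma Legendre_vals: "Legendre a P \<in> {-1,0,1}"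
  unfolding Legendre_def by auto

lemma Legendre_zero_iff: "Legendre a P = 0 \<longleftrightarrow> P dvd a"
  unfolding Legendre_def by (auto simp: cong_0_iff)

lemma Legendre_mult:
  assumes p: "prime (p::nat)" "2 < p"
  shows "Legendre (a*b) (int p) = Legendre a (int p) * Legendre b (int p)"
proof -
  let ?k = "(p - 1) div 2"
  have 1: "[Legendre (a*b) p = (a*b)^?k] (mod p)"
    using euler_criterion[OF p] by simp
  have 2: "[Legendre a p * Legendre b p = a^?k * b^?k] (mod p)"
    using euler_criterion[OF p, of a] euler_criterion[OF p, of b] cong_mult by fastforce
  have "[Legendre (a*b) p = Legendre a p * Legendre b p] (mod p)"
    using 1 2 by (metis cong_sym cong_trans power_mult_distrib)
  hence d: "int p dvd Legendre (a*b) p - Legendre a p * Legendre b p"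
    by (simp add: cong_iff_dvd_diff)
  have "Legendre (a*b) p - Legendre a p * Legendre b p \<in> {-2,-1,0,1,2}"
    using Legendre_vals[of "a*b" p] Legendre_vals[of a p] Legendre_vals[of b p] by auto
  moreover have "\<not> int p dvd 2" using p
    by (metis dvd_imp_le int_dvd_int_iff of_nat_numeral pos2 not_less)
  moreover have "\<not> int p dvd 1" using p by auto
  ultimately show ?thesis using d by auto
qed



lemma QuadRes_nat:
  "QuadRes (int p) (int s) \<longleftrightarrow> (\<exists>y::nat. [y^2 = s] (mod p))"
proof
  assume "QuadRes (int p) (int s)"
  then obtain y :: int where y: "[y^2 = int s] (mod int p)" unfolding QuadRes_def by blast
  show "\<exists>y::nat. [y^2 = s] (mod p)"
  proof (cases "p = 0")
    case True
    then have "y^2 = int s" using y by simp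
    then have "int (nat \<bar>y\<bar> ^ 2) = int s" by simp
    then have "nat \<bar>y\<bar> ^2 = s" by (simp only: of_nat_eq_iff)
    then show ?thesis using True by auto
  next
    case False
    have "[int (nat (y mod int p)) = y] (mod int p)" using False
      by (simp add: cong_def)
    then have "[int (nat (y mod int p)) ^2 = y^2] (mod int p)" by (rule cong_pow)
    then have "[int (nat (y mod int p) ^2) = int s] (mod int p)" using y cong_trans by auto
    then have "[nat (y mod int p) ^2 = s] (mod p)" using cong_int_iff by blast
    then show ?thesis by blast
  qed
next
  assume "\<exists>y::nat. [y^2 = s] (mod p)"
  then obtain y :: nat where "[y^2 = s] (mod p)" by blast
  then have "[int y ^2 = int s] (mod int p)" by (metis cong_int_iff of_nat_power)
  then show "QuadRes (int p) (int s)" unfolding QuadRes_def by blast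
qed

lemma card_QR:
  assumes p: "prime (p::nat)" "odd p"
  shows "card {s\<in>{1..<p}. QuadRes (int p) (int s)} = (p - 1) div 2"
proof -
  define k where "k = (p - 1) div 2"
  define Q where "Q = {s\<in>{1..<p}. QuadRes (int p) (int s)}"
  define f where "f x = x^2 mod p" for x :: nat
  have p2: "p > 2" using p by (metis prime_ge_2_nat le_neq_implies_less dvd_refl)
  have pk: "p = 2*k+1" using p p2 unfolding k_def by presburger
  have ip: "prime (int p)" using p by simp
  have inj: "inj_on f {1..k}"
  proof (rule inj_onI)
    fix x y assume x: "x \<in> {1..k}" and y: "y \<in> {1..k}" and e: "f x = f y"
    then have "[x^2 = y^2] (mod p)" unfolding f_def cong_def by simp
    then have "[int x^2 = int y^2] (mod int p)" by (metis cong_int_iff of_nat_power)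
    then have "int p dvd (int x - int y) * (int x + int y)"
      by (simp add: cong_iff_dvd_diff power2_eq_square algebra_simps dvd_diff_commute)
    then have "int p dvd (int x - int y) \<or> int p dvd (int x + int y)"
      using ip prime_dvd_multD by blast
    moreover have "\<not> int p dvd (int x + int y)"
      using x y pk by (auto dest: zdvd_imp_le)
    moreover have "int p dvd (int x - int y) \<Longrightarrow> x = y"
    proof -
      assume d: "int p dvd (int x - int y)"
      show "x = y"
      proof (rule ccontr)
        assume "x \<noteq> y"
        then consider "x < y" | "y < x" by linarith
        then show False
        proof cases
          case 1
          then have "int p dvd (int y - int x)" using d by (simp add: dvd_diff_commute)
          then show False using 1 x y pk by (auto dest: zdvd_imp_le)
        next
          case 2
          then show False using d x y pk by (auto dest: zdvd_imp_le)
        qed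
      qed
    qed
    ultimately show "x = y" by blast
  qed
  have img: "f ` {1..k} = Q"
  proof
    show "f ` {1..k} \<subseteq> Q"
    proof
      fix s assume "s \<in> f ` {1..k}"
      then obtain x where x: "x \<in> {1..k}" "s = f x" by blast
      have "\<not> p dvd x" using x pk by (auto dest: dvd_imp_le)
      then have "\<not> p dvd x^2" using p prime_dvd_power by blast
      then have "s \<noteq> 0" using x unfolding f_def by (simp add: dvd_eq_mod_eq_0)
      moreover have "s < p" using x p2 unfolding f_def by simp
      moreover have "[x^2 = s] (mod p)" using x unfolding f_def cong_def by simp
      ultimately show "s \<in> Q" unfolding Q_def using QuadRes_nat by auto
    qed
  next
    show "Q \<subseteq> f ` {1..k}"
    proof
      fix s assume "s \<in> Q"
      then have s: "1 \<le> s" "s < p" and "\<exists>y::nat. [y^2 = s] (mod p)"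
        unfolding Q_def using QuadRes_nat by auto
      then obtain y :: nat where y: "[y^2 = s] (mod p)" by blast
      define y' where "y' = y mod p"
      have "[y'^2 = y^2] (mod p)" unfolding y'_def by (simp add: cong_def power_mod)
      then have y': "[y'^2 = s] (mod p)" using y cong_trans by blast
      have "y' \<noteq> 0"
      proof
        assume "y' = 0"
        then have "[s = 0] (mod p)" using y' p2 by (simp add: cong_def)
        then show False using s by (auto simp: cong_def)
      qed
      have "y' < p" unfolding y'_def using p2 by simp
      show "s \<in> f ` {1..k}"
      proof (cases "y' \<le> k")
        case True
        have "f y' = s" using y' s unfolding f_def cong_def by simp
        then show ?thesis using True \<open>y' \<noteq> 0\<close> by force
      next
        case False
        define x where "x = p - y'"
        have x: "x \<in> {1..k}" using False \<open>y' < p\<close> pk unfolding x_def by auto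
        have "int x = int p - int y'" using \<open>y' < p\<close> unfolding x_def by simp
        moreover have "(int p - int y')^2 = int y' ^2 + int p * (int p - 2 * int y')"
          by (simp add: power2_eq_square algebra_simps)
        ultimately have "int x ^2 = int y' ^2 + int p * (int p - 2 * int y')"
          by simp
        then have "[int x ^2 = int y' ^2] (mod int p)"
          by (simp add: cong_def)
        then have "[x ^2 = y'^2] (mod p)" using cong_int_iff by fastforce
        then have "[x^2 = s] (mod p)" using y' cong_trans by blast
        then have "f x = s" using s unfolding f_def cong_def by simp
        then show ?thesis using x by force
      qed
    qed
  qed
  have "card Q = card {1..k}" using inj img card_image by fastforce
  then show ?thesis unfolding Q_def k_def by simp
qed



lemma sum_Legendre:
  assumes p: "prime (p::nat)" "odd p"
  shows "(\<Sum>s\<in>{1..<p}. Legendre (int s) (int p)) = 0"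
proof -
  define Q where "Q = {s\<in>{1..<p}. QuadRes (int p) (int s)}"
  have "(\<Sum>s\<in>{1..<p}. Legendre (int s) (int p))
      = (\<Sum>s\<in>{1..<p}. 2 * (if QuadRes (int p) (int s) then 1 else 0) - 1)"
  proof (rule sum.cong)
    fix s assume s: "s \<in> {1..<p}"
    then have "\<not> [int s = 0] (mod int p)"
      by (auto simp: cong_0_iff dest: dvd_imp_le)
    then show "Legendre (int s) (int p) = 2 * (if QuadRes (int p) (int s) then 1 else 0) - 1"
      unfolding Legendre_def by auto
  qed simp
  also have "\<dots> = 2 * (\<Sum>s\<in>{1..<p}. (if QuadRes (int p) (int s) then 1 else 0)) - int (p - 1)"
    by (simp add: sum_subtractf sum_distrib_left)
  also have "(\<Sum>s\<in>{1..<p}. (if QuadRes (int p) (int s) then 1 else 0::int)) = int (card Q)"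
    unfolding Q_def by (simp add: sum.inter_filter[symmetric])
  also have "card Q = (p - 1) div 2" unfolding Q_def using card_QR[OF p] .
  finally show ?thesis using p by (auto elim!: oddE)
qed

definition gg :: "nat \<Rightarrow> nat \<Rightarrow> int" where
  "gg p s = (if int p dvd int s \<or> Legendre (int s) (int p) = -1 then 1 else -1)"

lemma gg_alt: "gg p s = (if p dvd s then 1 else 0) - Legendre (int s) (int p)"
proof (cases "p dvd s")
  case True
  then have "Legendre (int s) (int p) = 0" using Legendre_zero_iff by auto
  then show ?thesis using True unfolding gg_def by auto
next
  case False
  then have "Legendre (int s) (int p) \<noteq> 0" using Legendre_zero_iff by auto
  then show ?thesis using False Legendre_vals[of "int s" "int p"] unfolding gg_def by auto
qed

lemma gg_periodic: "gg p (s + p) = gg p s"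
proof -
  have "[int (s+p) = int s] (mod int p)" by (simp add: cong_def)
  then have "Legendre (int (s+p)) (int p) = Legendre (int s) (int p)" by (rule Legendre_cong)
  then show ?thesis unfolding gg_alt by auto
qed

lemma gg_periodic_mult: "gg p (s + j * p) = gg p s"
proof (induction j)
  case (Suc j)
  have "s + Suc j * p = (s + j*p) + p" by simp
  then show ?case using Suc.IH gg_periodic[of p "s+j*p"] by metis
qed simp

lemma gg_period_sum:
  assumes p: "prime (p::nat)" "odd p"
  shows "(\<Sum>s\<in>{m..<m+p}. gg p s) = 1"
proof (induction m)
  case 0
  have p1: "p \<ge> 1" using p prime_ge_1_nat by blast
  have "(\<Sum>s\<in>{0..<p}. gg p s) = (\<Sum>s\<in>{0..<p}. (if p dvd s then 1 else 0)) - (\<Sum>s\<in>{0..<p}. Legendre (int s) (int p))"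
    unfolding gg_alt by (simp add: sum_subtractf)
  also have "(\<Sum>s\<in>{0..<p}. (if p dvd s then 1 else 0::int)) = (\<Sum>s\<in>{0..<p}. (if s = 0 then 1 else 0))"
    by (rule sum.cong) (auto dest: dvd_imp_le)
  also have "\<dots> = 1" using p1 by (simp add: sum.delta)
  also have "(\<Sum>s\<in>{0..<p}. Legendre (int s) (int p)) = Legendre 0 (int p) + (\<Sum>s\<in>{1..<p}. Legendre (int s) (int p))"
    using p1 by (simp add: sum.atLeast_Suc_lessThan)
  also have "\<dots> = 0" using sum_Legendre[OF p] Legendre_zero_iff[of 0 "int p"] by simp
  finally show ?case by simp
next
  case (Suc m)
  have p1: "p \<ge> 1" using p prime_ge_1_nat by blast
  have "(\<Sum>s\<in>{m..<Suc (m+p)}. gg p s) = (\<Sum>s\<in>{m..<m+p}. gg p s) + gg p (m+p)"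
    by (simp add: sum.atLeastLessThan_Suc)
  moreover have "(\<Sum>s\<in>{m..<Suc (m+p)}. gg p s) = gg p m + (\<Sum>s\<in>{Suc m..<Suc (m+p)}. gg p s)"
    by (simp add: sum.atLeast_Suc_lessThan)
  ultimately show ?case using Suc gg_periodic[of p m] by simp
qed



definition DD :: "nat \<Rightarrow> nat \<Rightarrow> int" where
  "DD p n = (\<Sum>b\<in>{1..n}. \<Sum>a\<in>{1..<b}. gg p (a+b))"

definition Dl :: "nat \<Rightarrow> nat \<Rightarrow> int" where
  "Dl p m = (\<Sum>a\<in>{1..m}. gg p (a + Suc m))"

lemma DD_0[simp]: "DD p 0 = 0" unfolding DD_def by simp

lemma DD_Suc: "DD p (Suc n) = DD p n + Dl p n"
  unfolding DD_def Dl_def by (simp add: sum.cl_ivl_Suc atLeastLessThanSuc_atLeastAtMost)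

lemma sum_cl_Suc1: "(\<Sum>b\<in>{1..Suc n}. h b) = (\<Sum>b\<in>{1..n}. h b) + (h (Suc n) :: int)"
  by (simp add: sum.cl_ivl_Suc)

lemma DD_sym: "2 * DD p n = (\<Sum>a\<in>{1..n}. \<Sum>b\<in>{1..n}. gg p (a+b)) - (\<Sum>a\<in>{1..n}. gg p (2*a))"
proof (induction n)
  case 0
  then show ?case by simp
next
  case (Suc n)
  have c: "(\<Sum>b\<in>{1..n}. gg p (Suc n + b)) = Dl p n"
    unfolding Dl_def by (rule sum.cong) (simp_all add: add.commute)
  have "(\<Sum>a\<in>{1..Suc n}. \<Sum>b\<in>{1..Suc n}. gg p (a+b))
      = (\<Sum>a\<in>{1..n}. (\<Sum>b\<in>{1..n}. gg p (a+b)) + gg p (a + Suc n)) + ((\<Sum>b\<in>{1..n}. gg p (Suc n + b)) + gg p (Suc n + Suc n))"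
    by (simp only: sum_cl_Suc1)
  also have "\<dots> = (\<Sum>a\<in>{1..n}. \<Sum>b\<in>{1..n}. gg p (a+b)) + Dl p n + (Dl p n + gg p (Suc n + Suc n))"
    by (simp only: sum.distrib c Dl_def[symmetric])
  also have "Suc n + Suc n = 2 * Suc n" by simp
  also have "(\<Sum>a\<in>{1..n}. \<Sum>b\<in>{1..n}. gg p (a+b)) + Dl p n + (Dl p n + gg p (2 * Suc n)) = (\<Sum>a\<in>{1..n}. \<Sum>b\<in>{1..n}. gg p (a+b)) + 2 * Dl p n + gg p (2 * Suc n)"
    by simp
  finally have F: "(\<Sum>a\<in>{1..Suc n}. \<Sum>b\<in>{1..Suc n}. gg p (a+b)) = (\<Sum>a\<in>{1..n}. \<Sum>b\<in>{1..n}. gg p (a+b)) + 2 * Dl p n + gg p (2 * Suc n)" .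
  have G: "(\<Sum>a\<in>{1..Suc n}. gg p (2*a)) = (\<Sum>a\<in>{1..n}. gg p (2*a)) + gg p (2 * Suc n)"
    by (rule sum_cl_Suc1)
  show ?case unfolding F G DD_Suc distrib_left using Suc.IH by linarith
qed

lemma sum_block:
  assumes p: "prime (p::nat)" "odd p"
  shows "(\<Sum>b\<in>{m+1..m+p}. gg p (b + k)) = 1"
proof -
  have p1: "p \<ge> 1" using p prime_ge_1_nat by blast
  have "(\<Sum>b\<in>{m+1..m+p}. gg p (b + k)) = (\<Sum>s\<in>{m+1+k..m+p+k}. gg p s)"
    by (rule sum.shift_bounds_cl_nat_ivl[symmetric])
  also have "{m+1+k..m+p+k} = {(m+k+1)..<(m+k+1)+p}" using p1 by auto
  also have "(\<Sum>s\<in>{(m+k+1)..<(m+k+1)+p}. gg p s) = 1" by (rule gg_period_sum[OF p])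
  finally show ?thesis .
qed

lemma Legendre_sum_full:
  assumes p: "prime (p::nat)" "odd p"
  shows "(\<Sum>a\<in>{1..p}. Legendre (int a) (int p)) = 0"
proof -
  have p1: "p \<ge> 1" using p prime_ge_1_nat by blast
  have "{1..p} = insert p {1..<p}" using p1 by auto
  then show ?thesis using sum_Legendre[OF p] Legendre_zero_iff[of "int p" "int p"] by simp
qed

lemma DD_p:
  assumes p: "prime (p::nat)" "odd p"
  shows "2 * DD p p = int p - 1"
proof -
  have p1: "p \<ge> 1" using p prime_ge_1_nat by blast
  have p2: "p > 2" using p by (metis prime_ge_2_nat le_neq_implies_less dvd_refl)
  have full: "(\<Sum>a\<in>{1..p}. \<Sum>b\<in>{1..p}. gg p (a+b)) = int p"
  proof -
    have "(\<Sum>a\<in>{1..p}. \<Sum>b\<in>{1..p}. gg p (a+b)) = (\<Sum>a\<in>{1..p}. 1)"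
    proof (rule sum.cong)
      fix a
      have "(\<Sum>b\<in>{1..p}. gg p (a+b)) = (\<Sum>b\<in>{0+1..0+p}. gg p (b+a))" by (simp add: add.commute)
      also have "\<dots> = 1" by (rule sum_block[OF p])
      finally show "(\<Sum>b\<in>{1..p}. gg p (a+b)) = 1" .
    qed simp
    then show ?thesis by simp
  qed
  have "(\<Sum>a\<in>{1..p}. gg p (2*a)) = (\<Sum>a\<in>{1..p}. (if a = p then 1 else 0)) - Legendre 2 (int p) * (\<Sum>a\<in>{1..p}. Legendre (int a) (int p))"
  proof -
    have "(\<Sum>a\<in>{1..p}. gg p (2*a)) = (\<Sum>a\<in>{1..p}. (if a = p then 1 else 0) - Legendre 2 (int p) * Legendre (int a) (int p))"
    proof (rule sum.cong)
      fix a assume a: "a \<in> {1..p}"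
      have n2: "\<not> p dvd 2" using p2 by (auto dest: dvd_imp_le)
      have "p dvd 2*a \<longleftrightarrow> p dvd 2 \<or> p dvd a" using p(1) by (rule prime_dvd_mult_iff)
      then have "p dvd 2*a \<longleftrightarrow> p dvd a" using n2 by blast
      also have "\<dots> \<longleftrightarrow> a = p" using a by (auto dest: dvd_imp_le)
      finally have 1: "p dvd 2*a \<longleftrightarrow> a = p" .
      have "Legendre (int (2*a)) (int p) = Legendre 2 (int p) * Legendre (int a) (int p)"
        using Legendre_mult[OF p(1) p2, of 2 "int a"] by simp
      then show "gg p (2*a) = (if a = p then 1 else 0) - Legendre 2 (int p) * Legendre (int a) (int p)"
        unfolding gg_alt using 1 by simp
    qed simp
    then show ?thesis by (simp add: sum_subtractf sum_distrib_left)
  qed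
  also have "\<dots> = 1" using Legendre_sum_full[OF p] p1 by (simp add: sum.delta)
  finally show ?thesis using DD_sym[of p p] full by simp
qed

lemma Dl_shift:
  assumes p: "prime (p::nat)" "odd p"
  shows "Dl p (m + p) = Dl p m + 1"
proof -
  have p1: "p \<ge> 1" using p prime_ge_1_nat by blast
  have "Dl p (m+p) = (\<Sum>a\<in>{1..m+p}. gg p (a + Suc m))"
    unfolding Dl_def
  proof (rule sum.cong)
    fix a
    have e: "a + Suc (m+p) = (a + Suc m) + p" by simp
    show "gg p (a + Suc (m+p)) = gg p (a + Suc m)" by (simp only: e gg_periodic)
  qed simp
  also have "\<dots> = (\<Sum>a\<in>{1..m}. gg p (a + Suc m)) + (\<Sum>a\<in>{m+1..m+p}. gg p (a + Suc m))"
    by (rule sum.ub_add_nat) simp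
  also have "(\<Sum>a\<in>{m+1..m+p}. gg p (a + Suc m)) = 1" by (rule sum_block[OF p])
  finally show ?thesis unfolding Dl_def by simp
qed

lemma DD_shift:
  assumes p: "prime (p::nat)" "odd p"
  shows "2 * DD p (n + p) = 2 * DD p n + 2 * int n + int p - 1"
proof (induction n)
  case 0
  then show ?case using DD_p[OF p] by simp
next
  case (Suc n)
  have "DD p (Suc n + p) = DD p (n+p) + Dl p (n + p)" using DD_Suc[of p "n+p"] by simp
  then show ?case using Suc DD_Suc[of p n] Dl_shift[OF p, of n] by simp
qed

lemma DD_qr:
  assumes p: "prime (p::nat)" "odd p"
  shows "2 * DD p (r + q * p) = 2 * DD p r + 2 * int q * int r + int p * int q ^ 2 - int q"
proof (induction q)
  case 0
  then show ?case by simp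
next
  case (Suc q)
  have e: "r + Suc q * p = (r + q * p) + p" by simp
  have A: "2 * DD p (r + Suc q * p) = 2 * DD p (r + q*p) + 2 * int (r + q*p) + int p - 1"
    using DD_shift[OF p, of "r + q*p"] by (simp only: e)
  have aux: "\<And>A B C :: int. 2*A = 2*B + 2*(R + Q*P) + P - 1 \<Longrightarrow> 2*B = 2*C + 2*Q*R + P*Q^2 - Q
     \<Longrightarrow> 2*A = 2*C + 2*(Q+1)*R + P*(Q+1)^2 - (Q+1)" for P Q R :: int
    by (simp add: algebra_simps power2_eq_square)
  have A': "2 * DD p (r + Suc q * p) = 2 * DD p (r + q*p) + 2 * (int r + int q * int p) + int p - 1"
    using A by simp
  have "2 * DD p (r + Suc q * p) = 2 * DD p r + 2 * (int q + 1) * int r + int p * (int q + 1) ^ 2 - (int q + 1)"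
    by (rule aux[OF A' Suc.IH])
  then show ?case by (simp add: ac_simps)
qed



definition dl :: "nat \<Rightarrow> int" where "dl s = (if even s then 1 else 0)"

definition Cf :: "nat \<Rightarrow> nat \<Rightarrow> int" where
  "Cf r s = (if 2 \<le> s \<and> s \<le> r+1 then int s - 1 - dl s
             else if r+2 \<le> s \<and> s \<le> 2*r then 2 * int r - int s + 1 - dl s else 0)"

lemma Cf_step: "Cf (Suc r) s = Cf r s + (if r+2 \<le> s \<and> s \<le> 2*r+1 then 2 else 0)"
proof -
  consider (a) "s = 2*r+1" | (b) "s = 2*r+2" | (c) "s \<noteq> 2*r+1 \<and> s \<noteq> 2*r+2" by blast
  then show ?thesis
  proof cases
    case a
    then show ?thesis unfolding Cf_def dl_def by auto
  next
    case b
    then show ?thesis unfolding Cf_def dl_def by auto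
  next
    case c
    then show ?thesis unfolding Cf_def by auto
  qed
qed

lemma Cf_0: "Cf 0 s = 0" unfolding Cf_def by auto

lemma lemA: "2*r+1 \<le> M \<Longrightarrow> 2 * DD p r = (\<Sum>s<M. Cf r s * gg p s)"
proof (induction r arbitrary: M)
  case 0
  then show ?case by (simp add: Cf_0)
next
  case (Suc r)
  have IH: "2 * DD p r = (\<Sum>s<M. Cf r s * gg p s)" using Suc by simp
  have "(\<Sum>s<M. Cf (Suc r) s * gg p s) = (\<Sum>s<M. Cf r s * gg p s) + (\<Sum>s<M. if s \<in> {r+2..2*r+1} then 2 * gg p s else 0)"
    unfolding Cf_step sum.distrib[symmetric] by (rule sum.cong) (auto simp: algebra_simps)
  also have "(\<Sum>s<M. if s \<in> {r+2..2*r+1} then 2 * gg p s else 0) = (\<Sum>s\<in>{..<M} \<inter> {r+2..2*r+1}. 2 * gg p s)"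
    by (rule sum.inter_restrict[symmetric]) simp
  also have "{..<M} \<inter> {r+2..2*r+1} = {1 + Suc r..r + Suc r}" using Suc.prems by auto
  also have "(\<Sum>s\<in>{1 + Suc r..r + Suc r}. 2 * gg p s) = 2 * (\<Sum>a\<in>{1..r}. gg p (a + Suc r))"
    by (simp only: sum.shift_bounds_cl_nat_ivl sum_distrib_left)
  finally show ?case using IH DD_Suc[of p r] unfolding Dl_def by simp
qed

lemma evalR:
  assumes p: "prime (p::nat)" "odd p" and r: "r < p"
  shows "2 * DD p r = max 0 (2 * int r - int p + 1)
     - ((\<Sum>s\<in>{2..r+1} - {p}. (int s - 1 - (if even s then 1 else 0)) * Legendre (int s) (int p))
      + (\<Sum>s\<in>{r+2..2*r} - {p}. (2 * int r - int s + 1 - (if even s then 1 else 0)) * Legendre (int s) (int p)))"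
proof -
  define L where "L s = Legendre (int s) (int p)" for s
  define h1 where "h1 s = (int s - 1 - (if even s then 1 else 0)) * L s" for s
  define h2 where "h2 s = (2 * int r - int s + 1 - (if even s then 1 else 0)) * L s" for s
  have Lp: "L p = 0" unfolding L_def using Legendre_zero_iff by simp
  have "2 * DD p r = (\<Sum>s<2*p+1. Cf r s * gg p s)" by (rule lemA) (use r in simp)
  also have "\<dots> = (\<Sum>s<2*p+1. Cf r s * (if p dvd s then 1 else 0)) - (\<Sum>s<2*p+1. Cf r s * L s)"
    unfolding gg_alt L_def by (simp add: sum_subtractf algebra_simps)
  also have "(\<Sum>s<2*p+1. Cf r s * (if p dvd s then 1 else 0)) = (\<Sum>s<2*p+1. if s = p then Cf r p else 0)"
  proof (rule sum.cong)
    fix s assume s: "s \<in> {..<2*p+1}"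
    show "Cf r s * (if p dvd s then 1 else 0) = (if s = p then Cf r p else 0)"
    proof (cases "p dvd s \<and> s \<noteq> p")
      case True
      then obtain k where k: "s = p * k" by blast
      have p1: "p \<ge> 1" using p prime_ge_1_nat by blast
      have s2: "s < 2*p+1" using s by simp
      have "p * k < p * 3" using s2 k p1 by linarith
      then have "k < 3" by simp
      then have "k = 0 \<or> k = 2" using True k by auto
      then have "s = 0 \<or> s = 2*p" using k by auto
      then have "Cf r s = 0" unfolding Cf_def using r by auto
      then show ?thesis using True by simp
    qed auto
  qed simp
  also have "\<dots> = Cf r p" by (simp add: sum.delta)
  also have "Cf r p = max 0 (2 * int r - int p + 1)"
  proof -
    have "odd p" using p by simp
    then show ?thesis unfolding Cf_def dl_def using r by auto
  qed
  also have "(\<Sum>s<2*p+1. Cf r s * L s) = (\<Sum>s<2*p+1. (if s \<in> {2..r+1} then h1 s else 0) + (if s \<in> {r+2..2*r} then h2 s else 0))"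
    by (rule sum.cong) (auto simp: Cf_def h1_def h2_def dl_def)
  also have "\<dots> = (\<Sum>s\<in>{..<2*p+1} \<inter> {2..r+1}. h1 s) + (\<Sum>s\<in>{..<2*p+1} \<inter> {r+2..2*r}. h2 s)"
    by (simp add: sum.distrib sum.inter_restrict)
  also have "{..<2*p+1} \<inter> {2..r+1} = {2..r+1}" using r by auto
  also have "{..<2*p+1} \<inter> {r+2..2*r} = {r+2..2*r}" using r by auto
  also have "(\<Sum>s\<in>{2..r+1}. h1 s) = (\<Sum>s\<in>{2..r+1} - {p}. h1 s)"
    using Lp by (simp add: sum_diff1 h1_def)
  also have "(\<Sum>s\<in>{r+2..2*r}. h2 s) = (\<Sum>s\<in>{r+2..2*r} - {p}. h2 s)"
    using Lp by (simp add: sum_diff1 h2_def)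
  finally show ?thesis unfolding h1_def h2_def L_def .
qed



lemma sum_pm1:
  assumes "finite E"
  shows "(\<Sum>e\<in>E. if P e then 1 else -1 :: int) = int (card {e\<in>E. P e}) - int (card {e\<in>E. \<not> P e})"
proof -
  have "(\<Sum>e\<in>E. if P e then 1 else -1 :: int) = (\<Sum>e\<in>E \<inter> {x. P x}. 1) + (\<Sum>e\<in>E \<inter> - {x. P x}. -1)"
    by (rule sum.If_cases[OF assms])
  also have "E \<inter> {x. P x} = {e\<in>E. P e}" by auto
  also have "E \<inter> - {x. P x} = {e\<in>E. \<not> P e}" by auto
  finally show ?thesis by simp
qed

lemma gg_label: "gg p (sum f e) = (if edge_label p f e = 0 then 1 else -1)"
  unfolding gg_def edge_label_def Let_def by auto

lemma label01: "edge_label p f e = 0 \<or> edge_label p f e = 1"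
  unfolding edge_label_def Let_def by auto

lemma complete_edges_bij:
  assumes b: "bij_betw f V W"
  shows "bij_betw ((`) f) (complete_edges V) (complete_edges W)"
proof -
  have inj: "inj_on f V" using b by (rule bij_betw_imp_inj_on)
  have fV: "f ` V = W" using b by (rule bij_betw_imp_surj_on)
  have sub: "e \<in> complete_edges V \<Longrightarrow> e \<subseteq> V" for e unfolding complete_edges_def by auto
  show ?thesis unfolding bij_betw_def
  proof
    show "inj_on ((`) f) (complete_edges V)"
    proof (rule inj_onI)
      fix x y assume "x \<in> complete_edges V" "y \<in> complete_edges V" "f ` x = f ` y"
      then show "x = y" using inj_on_image_eq_iff[OF inj sub sub] by blast
    qed
    show "(`) f ` complete_edges V = complete_edges W"
    proof
      show "(`) f ` complete_edges V \<subseteq> complete_edges W"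
      proof
        fix e assume "e \<in> (`) f ` complete_edges V"
        then obtain u v where uv: "e = f ` {u,v}" "u \<in> V" "v \<in> V" "u \<noteq> v"
          unfolding complete_edges_def by blast
        then have "f u \<noteq> f v" using inj inj_on_eq_iff by metis
        moreover have "f u \<in> W" "f v \<in> W" using uv fV by auto
        moreover have "e = {f u, f v}" using uv by simp
        ultimately show "e \<in> complete_edges W" unfolding complete_edges_def by blast
      qed
      show "complete_edges W \<subseteq> (`) f ` complete_edges V"
      proof
        fix e assume "e \<in> complete_edges W"
        then obtain x y where e: "e = {x,y}" "x \<in> W" "y \<in> W" "x \<noteq> y"
          unfolding complete_edges_def by blast
        then obtain u v where uv: "u \<in> V" "v \<in> V" "x = f u" "y = f v" using fV by blast
        then have "u \<noteq> v" using e by auto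
        then have "{u,v} \<in> complete_edges V" using uv unfolding complete_edges_def by blast
        moreover have "f ` {u,v} = e" using e uv by auto
        ultimately show "e \<in> (`) f ` complete_edges V" by blast
      qed
    qed
  qed
qed

lemma complete_edges_interval:
  "bij_betw (\<lambda>(b,a). {a,b::nat}) (SIGMA b:{1..n}. {1..<b}) (complete_edges {1..n})"
  unfolding bij_betw_def
proof
  show "inj_on (\<lambda>(b,a). {a,b::nat}) (SIGMA b:{1..n}. {1..<b})"
    by (rule inj_onI) (auto simp: doubleton_eq_iff)
  show "(\<lambda>(b,a). {a,b::nat}) ` (SIGMA b:{1..n}. {1..<b}) = complete_edges {1..n}"
  proof
    show "(\<lambda>(b,a). {a,b::nat}) ` (SIGMA b:{1..n}. {1..<b}) \<subseteq> complete_edges {1..n}"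
    proof
      fix e assume "e \<in> (\<lambda>(b,a). {a,b::nat}) ` (SIGMA b:{1..n}. {1..<b})"
      then obtain b a where ba: "b \<in> {1..n}" "a \<in> {1..<b}" "e = {a,b}" by auto
      then have "a \<in> {1..n}" "a \<noteq> b" by auto
      then show "e \<in> complete_edges {1..n}" unfolding complete_edges_def using ba by blast
    qed
    show "complete_edges {1..n} \<subseteq> (\<lambda>(b,a). {a,b::nat}) ` (SIGMA b:{1..n}. {1..<b})"
    proof
      fix e assume "e \<in> complete_edges {1..n}"
      then obtain x y where e: "e = {x,y}" "x \<in> {1..n}" "y \<in> {1..n}" "x \<noteq> y"
        unfolding complete_edges_def by blast
      show "e \<in> (\<lambda>(b,a). {a,b::nat}) ` (SIGMA b:{1..n}. {1..<b})"
      proof (cases "x < y")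
        case True
        then have "(y,x) \<in> (SIGMA b:{1..n}. {1..<b})" using e by auto
        then show ?thesis using e by (auto intro!: image_eqI[where x="(y,x)"])
      next
        case False
        then have "(x,y) \<in> (SIGMA b:{1..n}. {1..<b})" using e by auto
        then show ?thesis using e by (auto intro!: image_eqI[where x="(x,y)"])
      qed
    qed
  qed
qed

lemma edges_DD:
  assumes b: "bij_betw f V {1..n}"
  shows "real (edge_count p f V 0) - real (edge_count p f V 1) = real_of_int (DD p n)"
proof -
  define E where "E = complete_edges V"
  have fV: "finite V" using b bij_betw_finite by blast
  have "E \<subseteq> Pow V" unfolding E_def complete_edges_def by auto
  then have fE: "finite E" using fV finite_subset by blast
  have inj: "inj_on f V" using b by (rule bij_betw_imp_inj_on)
  have "int (edge_count p f V 0) - int (edge_count p f V 1) = (\<Sum>e\<in>E. if edge_label p f e = 0 then 1 else -1)"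
  proof -
    have l: "\<And>e. edge_label p f e \<noteq> 0 \<longleftrightarrow> edge_label p f e = 1" using label01 by (metis zero_neq_one)
    have "{e\<in>E. \<not> edge_label p f e = 0} = {e\<in>E. edge_label p f e = 1}" using l by blast
    moreover have "(\<Sum>e\<in>E. if edge_label p f e = 0 then 1 else -1) = int (card {e\<in>E. edge_label p f e = 0}) - int (card {e\<in>E. \<not> edge_label p f e = 0})"
      by (rule sum_pm1[OF fE])
    moreover have "edge_count p f V i = card {e\<in>E. edge_label p f e = i}" for i
      unfolding edge_count_def E_def ..
    ultimately show ?thesis by presburger
  qed
  also have "\<dots> = (\<Sum>e\<in>E. gg p (sum (\<lambda>x. x) (f ` e)))"
  proof (rule sum.cong)
    fix e assume "e \<in> E"
    then have "e \<subseteq> V" unfolding E_def complete_edges_def by auto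
    then have "inj_on f e" using inj inj_on_subset by blast
    then have "sum (\<lambda>x. x) (f ` e) = sum f e" by (simp add: sum.reindex)
    then show "(if edge_label p f e = 0 then 1 else -1) = gg p (sum (\<lambda>x. x) (f ` e))"
      by (simp only: gg_label)
  qed simp
  also have "\<dots> = (\<Sum>e\<in>complete_edges {1..n}. gg p (sum (\<lambda>x. x) e))"
    unfolding E_def by (rule sum.reindex_bij_betw[OF complete_edges_bij[OF b]])
  also have "\<dots> = (\<Sum>x\<in>(SIGMA b:{1..n}. {1..<b}). gg p (sum (\<lambda>x. x) ((\<lambda>(b,a). {a,b::nat}) x)))"
    by (rule sum.reindex_bij_betw[OF complete_edges_interval, symmetric])
  also have "\<dots> = (\<Sum>x\<in>(SIGMA b:{1..n}. {1..<b}). gg p (snd x + fst x))"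
  proof (rule sum.cong)
    fix x assume "x \<in> (SIGMA b:{1..n}. {1..<b})"
    then obtain b a where "x = (b,a)" "a < b" by auto
    then show "gg p (sum (\<lambda>x. x) ((\<lambda>(b,a). {a,b::nat}) x)) = gg p (snd x + fst x)" by simp
  qed simp
  also have "\<dots> = (\<Sum>(b,a)\<in>(SIGMA b:{1..n}. {1..<b}). gg p (a+b))"
    by (rule sum.cong) (simp_all add: split_beta)
  also have "\<dots> = DD p n" unfolding DD_def by (rule sum.Sigma[symmetric]) auto
  finally have "int (edge_count p f V 0) - int (edge_count p f V 1) = DD p n" .
  then have "real_of_int (int (edge_count p f V 0) - int (edge_count p f V 1)) = real_of_int (DD p n)"
    by (rule arg_cong)
  then show ?thesis by simp
qed



theorem mainTheorem5:
  fixes p n :: nat and V :: "'a set" and f :: "'a \<Rightarrow> nat"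
  assumes "prime p" and "odd p" and "n \<ge> 1"
    and "bij_betw f V {1..n}"
  shows "let q = n div p; r = n - q * p;
             \<psi> = max 0 (2 * int r - int p + 1);
             \<delta> = (\<lambda>s::nat. if even s then 1 else 0 :: int);
             S1 = (\<Sum>s\<in>{2..r+1} - {p}. (int s - 1 - \<delta> s) * Legendre (int s) (int p));
             S2 = (\<Sum>s\<in>{r+2..2*r} - {p}. (2 * int r - int s + 1 - \<delta> s) * Legendre (int s) (int p));
             S = S1 + S2
         in real (edge_count p f V 0) - real (edge_count p f V 1)
            = (real_of_int (2 * int n * int q - int p * int q ^ 2 - int q + \<psi>)) / 2
              - real_of_int S / 2"
proof -
  have p: "prime p" "odd p" using assms by auto
  have p0: "p > 0" using p prime_gt_0_nat by blast
  define q where "q = n div p"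
  define r where "r = n - q * p"
  have rmod: "r = n mod p" unfolding r_def q_def by (simp add: minus_div_mult_eq_mod)
  have rp: "r < p" using rmod p0 by simp
  have neq: "r + q * p = n" unfolding rmod q_def by (rule mod_div_mult_eq)
  define \<psi> where "\<psi> = max 0 (2 * int r - int p + 1)"
  define S where "S = (\<Sum>s\<in>{2..r+1} - {p}. (int s - 1 - (if even s then 1 else 0)) * Legendre (int s) (int p))
      + (\<Sum>s\<in>{r+2..2*r} - {p}. (2 * int r - int s + 1 - (if even s then 1 else 0)) * Legendre (int s) (int p))"
  have E: "real (edge_count p f V 0) - real (edge_count p f V 1) = real_of_int (DD p n)"
    by (rule edges_DD[OF assms(4)])
  have A: "2 * DD p n = 2 * DD p r + 2 * int q * int r + int p * int q ^ 2 - int q"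
    using DD_qr[OF p, of r q] neq by simp
  have B: "2 * DD p r = \<psi> - S" unfolding \<psi>_def S_def by (rule evalR[OF p rp])
  have nI: "int n = int r + int q * int p" using neq by (metis of_nat_add of_nat_mult)
  have aux: "\<And>D Dr :: int. 2*D = 2*Dr + 2*Q*R + P*Q^2 - Q \<Longrightarrow> 2*Dr = Psi - SS \<Longrightarrow> N = R + Q*P
      \<Longrightarrow> 2*D = (2*N*Q - P*Q^2 - Q + Psi) - SS" for P Q R N Psi SS :: int
    by (simp add: algebra_simps power2_eq_square)
  have I: "2 * DD p n = (2 * int n * int q - int p * int q ^ 2 - int q + \<psi>) - S"
    by (rule aux[OF A B nI])
  have R: "real_of_int (DD p n) = real_of_int (2 * int n * int q - int p * int q ^ 2 - int q + \<psi>) / 2 - real_of_int S / 2"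
  proof -
    have "real_of_int (2 * DD p n) = real_of_int ((2 * int n * int q - int p * int q ^ 2 - int q + \<psi>) - S)"
      using I by (rule arg_cong)
    then show ?thesis by (simp add: field_simps)
  qed
  show ?thesis unfolding Let_def q_def[symmetric] r_def[symmetric]
    using E R unfolding \<psi>_def S_def by simp
qed

end
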